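(* Consider the simple receiver case: $u(a,\theta)=\theta-a$ (so $a^\star(\mu)=\mathbb E_\mu[\theta]$ and $a^\star(\delta_\theta)=\theta$), with $V$ satisfying Assumption 1. If $V(a,\theta)$ is convex in $a$ for each $\theta$ and satisfies $V(\theta_1,\theta_2)+V(\theta_2,\theta_1)\le V(\theta_1,\theta_1)+V(\theta_2,\theta_2)$ for all $\theta_1,\theta_2\in\Theta$, then full disclosure is optimal.
   Context: Setting. $A=[0,1]$ is the set of actions and $\overline\Theta=[0,1]$ the set of states. For a compact metric space $X$, $\Delta(X)$ is the set of Borel probability measures on $X$ and $\operatorname{supp}(\eta)$ is the smallest compact set of $\eta$-measure one. The prior is $\phi\in\Delta(\overline\Theta)$, with support $\Theta=\operatorname{supp}(\phi)$. The sender's utility is $V:A\times\overline\Theta\to\mathbb R$, differentiable in $a$ with $v=\partial V/\partial a$ continuous (Assumption 1). $\delta_\theta$ is the Dirac measure at $\theta$; for a posterior $\mu\in\Delta(\Theta)$ the receiver's action is $a^\star(\mu)$. An outcome is $\pi\in\Delta(A\times\Theta)$. It is implementable if (P1) its marginal on $\Theta$ equals $\phi$ and (P2) $\int_{\tilde A\times\Theta}u(a,\theta)\,d\pi(a,\theta)=0$ for every measurable $\tilde A\subset A$. It is optimal if it maximizes $\int V\,d\pi$ over implementable outcomes. The full-disclosure outcome is the image of $\phi$ under the map $\theta\mapsto(a^\star(\delta_\theta),\theta)$; "full disclosure is optimal" means this outcome is optimal. *)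

theory Defs
  imports "HOL-Probability.Probability"
begin

text \<open>Actions and states both live in [0,1]. Measures on reals / pairs of reals carry the
Borel sigma-algebra; a probability measure "in Delta(X)" is a Borel probability measure
giving mass one to X.\<close>

definition supp :: "real measure \<Rightarrow> real set" where
  "supp \<mu> = \<Inter>{C. closed C \<and> emeasure \<mu> (space \<mu> - C) = 0}"

definition is_prior :: "real measure \<Rightarrow> bool" where
  "is_prior \<phi> \<longleftrightarrow> sets \<phi> = sets borel \<and> prob_space \<phi> \<and> emeasure \<phi> {0..1} = 1"

definition implementable ::
  "(real \<Rightarrow> real \<Rightarrow> real) \<Rightarrow> real measure \<Rightarrow> (real \<times> real) measure \<Rightarrow> bool" where
  "implementable u \<phi> \<pi> \<longleftrightarrow>
     sets \<pi> = sets (borel :: (real \<times> real) measure) \<and> prob_space \<pi> \<and>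
     emeasure \<pi> ({0..1} \<times> supp \<phi>) = 1 \<and>
     distr \<pi> borel snd = \<phi> \<and>
     (\<forall>At. At \<in> sets borel \<and> At \<subseteq> {0..1} \<longrightarrow>
        set_lebesgue_integral \<pi> (At \<times> supp \<phi>) (\<lambda>(a, \<theta>). u a \<theta>) = 0)"

definition optimal ::
  "(real \<Rightarrow> real \<Rightarrow> real) \<Rightarrow> (real \<Rightarrow> real \<Rightarrow> real) \<Rightarrow> real measure
     \<Rightarrow> (real \<times> real) measure \<Rightarrow> bool" where
  "optimal u V \<phi> \<pi> \<longleftrightarrow> implementable u \<phi> \<pi> \<and>
     (\<forall>\<rho>. implementable u \<phi> \<rho> \<longrightarrow>
        (\<integral>x. (\<lambda>(a, \<theta>). V a \<theta>) x \<partial>\<rho>) \<le> (\<integral>x. (\<lambda>(a, \<theta>). V a \<theta>) x \<partial>\<pi>))"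

definition full_disclosure ::
  "(real \<Rightarrow> real) \<Rightarrow> real measure \<Rightarrow> (real \<times> real) measure" where
  "full_disclosure astar_dirac \<phi> = distr \<phi> borel (\<lambda>\<theta>. (astar_dirac \<theta>, \<theta>))"

text \<open>Assumption 1: V differentiable in a on A with continuous derivative v.
  (We also take V jointly continuous so that expected utilities are well defined.)\<close>
definition assumption1 :: "(real \<Rightarrow> real \<Rightarrow> real) \<Rightarrow> bool" where
  "assumption1 V \<longleftrightarrow> continuous_on ({0..1} \<times> {0..1}) (\<lambda>(a, \<theta>). V a \<theta>) \<and>
     (\<exists>v. continuous_on ({0..1} \<times> {0..1}) (\<lambda>(a, \<theta>). v a \<theta>) \<and>
        (\<forall>a\<in>{0..1}. \<forall>\<theta>\<in>{0..1}.
           ((\<lambda>b. V b \<theta>) has_real_derivative v a \<theta>) (at a within {0..1})))"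

end

theory Submission
  imports Defs
begin
context
  fixes W :: "real \<Rightarrow> real \<Rightarrow> real" and v :: "real \<Rightarrow> real \<Rightarrow> real"
    and \<Theta> :: "real set" and \<rho> :: "(real \<times> real) measure" and M K :: real
  assumes Wc: "continuous_on UNIV (\<lambda>p. W (fst p) (snd p))"
    and Wb: "\<And>a t. \<bar>W a t\<bar> \<le> K"
    and vb: "\<And>a t. \<bar>v a t\<bar> \<le> M"
    and tang: "\<And>a x t. a \<in> {0..1} \<Longrightarrow> x \<in> {0..1} \<Longrightarrow> t \<in> {0..1} \<Longrightarrow> W a t + v a t * (x - a) \<le> W x t"
    and cross: "\<And>t1 t2. t1 \<in> \<Theta> \<Longrightarrow> t2 \<in> \<Theta> \<Longrightarrow> W t1 t2 + W t2 t1 \<le> W t1 t1 + W t2 t2"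
    and Tsub: "\<Theta> \<subseteq> {0..1}" and Tcl: "closed \<Theta>"
    and rp: "prob_space \<rho>" and rs: "sets \<rho> = sets borel"
    and P2: "\<And>B. B \<in> sets borel \<Longrightarrow> B \<subseteq> {0..1} \<Longrightarrow> (\<integral>p. indicator (B \<times> \<Theta>) p * (snd p - fst p) \<partial>\<rho>) = 0"
begin

lemma Wmeas0: "(\<lambda>p. W (fst p) (snd p)) \<in> borel_measurable (borel \<Otimes>\<^sub>M borel)"
  using Wc borel_prod by (metis borel_measurable_continuous_onI measurable_cong_sets open_UNIV sets_UNIV)

lemma Wmeas[measurable (raw)]: "f \<in> borel_measurable N \<Longrightarrow> g \<in> borel_measurable N \<Longrightarrow> (\<lambda>x. W (f x) (g x)) \<in> borel_measurable N"
  using measurable_compose[OF measurable_Pair Wmeas0, of f N g] by simp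

lemma rs2: "sets \<rho> = sets (borel \<Otimes>\<^sub>M borel)" unfolding borel_prod by (rule rs)

lemma intg: "(f::real\<times>real\<Rightarrow>real) \<in> borel_measurable (borel \<Otimes>\<^sub>M borel) \<Longrightarrow> (\<And>x. \<bar>f x\<bar> \<le> C) \<Longrightarrow> integrable \<rho> f"
  using rp prob_space.finite_measure
  by (intro finite_measure.integrable_const_bound[of \<rho> f C]) (auto simp: measurable_cong_sets[OF rs2 refl])

lemma Tborel[measurable]: "\<Theta> \<in> sets borel" using Tcl by simp

lemma prodborel: "B \<in> sets borel \<Longrightarrow> B \<times> \<Theta> \<in> sets (borel \<Otimes>\<^sub>M borel :: (real\<times>real) measure)"
  by (simp add: pair_measureI)

lemma meas_pp: "(f::(real\<times>real)\<times>(real\<times>real) \<Rightarrow> real) \<in> borel_measurable ((borel \<Otimes>\<^sub>M borel) \<Otimes>\<^sub>M (borel \<Otimes>\<^sub>M borel)) \<Longrightarrow> f \<in> borel_measurable (\<rho> \<Otimes>\<^sub>M \<rho>)"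
  by (simp add: measurable_cong_sets[OF sets_pair_measure_cong[OF rs2 rs2] refl])

lemma meas_r: "(f::(real\<times>real) \<Rightarrow> real) \<in> borel_measurable (borel \<Otimes>\<^sub>M borel) \<Longrightarrow> f \<in> borel_measurable \<rho>"
  by (simp add: measurable_cong_sets[OF rs refl] borel_prod)

lemma test: assumes [measurable]: "E \<in> sets (borel \<Otimes>\<^sub>M borel)" shows
 "(\<lambda>x. indicator E (fst x) * indicator E (snd x) * W (snd (snd x)) (snd (fst x))) \<in> borel_measurable (\<rho> \<Otimes>\<^sub>M \<rho>)"
  apply (rule meas_pp)
  by measurable

lemma sp: "space \<rho> = UNIV" using sets_eq_imp_space_eq[OF rs] by simp

lemma Mnn: "0 \<le> M" using vb[of 0 0] by simp

lemma Knn: "0 \<le> K" using Wb[of 0 0] by simp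

lemma bin:
  assumes B[measurable]: "B \<in> sets borel" and Bs: "B \<subseteq> {0..1}" and dpos: "0 \<le> \<delta>"
    and d: "\<And>a a'. a \<in> B \<Longrightarrow> a' \<in> B \<Longrightarrow> \<bar>a - a'\<bar> \<le> \<delta>"
  shows "(\<integral>p. indicator (B \<times> \<Theta>) p * W (fst p) (snd p) \<partial>\<rho>)
     \<le> (\<integral>p. indicator (B \<times> \<Theta>) p * W (snd p) (snd p) \<partial>\<rho>) + M * \<delta> * measure \<rho> (B \<times> \<Theta>)"
proof -
  define E where "E = B \<times> \<Theta>"
  define F where "F = (indicator E :: real \<times> real \<Rightarrow> real)"
  define m where "m = measure \<rho> E"
  have E[measurable]: "E \<in> sets (borel \<Otimes>\<^sub>M borel)" unfolding E_def by (rule prodborel[OF B])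
  have Fm[measurable]: "F \<in> borel_measurable (borel \<Otimes>\<^sub>M borel)" unfolding F_def by measurable
  have F01: "F p = 0 \<or> F p = 1" for p unfolding F_def by (simp add: indicator_def)
  have Fb: "\<bar>F p\<bar> \<le> 1" for p using F01[of p] by auto
  have intF: "integral\<^sup>L \<rho> F = m" unfolding F_def m_def by (simp add: sp)
  have m0: "0 \<le> m" unfolding m_def by simp
  have inE: "fst p \<in> {0..1} \<and> snd p \<in> {0..1} \<and> snd p \<in> \<Theta>" if "F p \<noteq> 0" for p
    using that Bs Tsub unfolding F_def E_def by (auto simp: indicator_def split: if_splits)
  have inE': "x \<in> {0..1} \<and> y \<in> {0..1} \<and> y \<in> \<Theta>" if "F (x,y) \<noteq> 0" for x y
    using inE[OF that] by simp
  have Fbd: "\<bar>F q * h q\<bar> \<le> C" if "\<And>q. F q \<noteq> 0 \<Longrightarrow> \<bar>h q\<bar> \<le> C" "0 \<le> C" for h q C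
    using F01[of q] that by (cases "F q = 0") auto
  have intgF: "integrable \<rho> (\<lambda>q. F q * h q)" if "h \<in> borel_measurable (borel \<Otimes>\<^sub>M borel)"
     "\<And>q. F q \<noteq> 0 \<Longrightarrow> \<bar>h q\<bar> \<le> C" "0 \<le> C" for h C
    using that by (intro intg[where C=C] Fbd) (auto intro: borel_measurable_times Fm)
  have mean: "(\<integral>q. F q * snd q \<partial>\<rho>) = (\<integral>q. F q * fst q \<partial>\<rho>)"
  proof -
    have "(\<integral>q. F q * snd q \<partial>\<rho>) - (\<integral>q. F q * fst q \<partial>\<rho>) = (\<integral>q. F q * (snd q - fst q) \<partial>\<rho>)"
      unfolding right_diff_distrib
      apply (rule Bochner_Integration.integral_diff[symmetric]; rule intgF[where C=1])
      apply measurable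
      apply (auto dest: inE inE')
      done
    also have "\<dots> = 0" using P2[OF B Bs] unfolding F_def E_def .
    finally show ?thesis by simp
  qed
  have intFc: "(\<integral>q. F q * c \<partial>\<rho>) = c * m" for c
    using intF by (simp add: mult.commute)
  have inner: "m * W (fst p) (snd p) - M * \<delta> * m \<le> (\<integral>q. F q * W (snd q) (snd p) \<partial>\<rho>)"
    if Fp: "F p \<noteq> 0" for p
  proof -
    define a where "a = fst p"
    define t where "t = snd p"
    have a01: "a \<in> {0..1}" and t01: "t \<in> {0..1}" using inE[OF Fp] unfolding a_def t_def by auto
    have aB: "a \<in> B" using Fp unfolding F_def E_def a_def by (auto simp: indicator_def split: if_splits)
    define X where "X = (\<integral>q. F q * (fst q - a) \<partial>\<rho>)"
    have i1: "integrable \<rho> (\<lambda>q. F q * (fst q - a))"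
    proof (rule intgF[where C=1])
      fix q assume "F q \<noteq> 0"
      from inE[OF this] a01 show "\<bar>fst q - a\<bar> \<le> 1" by auto
    qed auto
    have i2: "integrable \<rho> (\<lambda>q. F q * \<delta>)"
      by (rule intgF[where C=\<delta>]) (use dpos in auto)
    have "\<bar>X\<bar> \<le> (\<integral>q. F q * \<delta> \<partial>\<rho>)"
      unfolding X_def
    proof (rule integral_abs_bound_integral[OF i1 i2])
      fix q
      show "\<bar>F q * (fst q - a)\<bar> \<le> F q * \<delta>"
      proof (cases "F q = 0")
        case False
        then have "F q = 1" using F01[of q] by auto
        moreover have "fst q \<in> B" using False unfolding F_def E_def by (auto simp: indicator_def split: if_splits)
        ultimately show ?thesis using d[OF _ aB] by auto
      qed simp
    qed
    then have Xb: "\<bar>X\<bar> \<le> \<delta> * m" using intF by (simp add: mult.commute)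
    have vX: "\<bar>v a t * X\<bar> \<le> M * (\<delta> * m)"
      unfolding abs_mult by (rule mult_mono[OF vb Xb]) (auto simp: Mnn)
    have Xeq: "X = (\<integral>q. F q * snd q \<partial>\<rho>) - a * m"
    proof -
      have "X = (\<integral>q. F q * fst q - F q * a \<partial>\<rho>)" unfolding X_def by (simp add: algebra_simps)
      also have "\<dots> = (\<integral>q. F q * fst q \<partial>\<rho>) - (\<integral>q. F q * a \<partial>\<rho>)"
        by (rule Bochner_Integration.integral_diff; rule intgF[where C=1]) (use a01 in \<open>auto dest: inE inE'\<close>)
      finally show ?thesis using mean intFc by simp
    qed
    have iA: "integrable \<rho> (\<lambda>q. F q * W a t)" by (rule intgF[where C="\<bar>W a t\<bar>"]) auto
    have iB0: "integrable \<rho> (\<lambda>q. F q * snd q)"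
    proof (rule intgF[where C=1])
      fix q assume "F q \<noteq> 0"
      from inE[OF this] show "\<bar>snd q\<bar> \<le> 1" by auto
    qed auto
    have iB: "integrable \<rho> (\<lambda>q. v a t * (F q * snd q))" using iB0 by simp
    have iF: "integrable \<rho> F" by (rule intg[where C=1]) (auto simp: Fb)
    have iC: "integrable \<rho> (\<lambda>q. (v a t * a) * F q)" using iF by simp
    have e0: "(\<integral>q. F q * (W a t + v a t * (snd q - a)) \<partial>\<rho>)
        = (\<integral>q. F q * W a t + v a t * (F q * snd q) - (v a t * a) * F q \<partial>\<rho>)"
      by (simp add: algebra_simps)
    have "(\<integral>q. F q * W a t + v a t * (F q * snd q) - (v a t * a) * F q \<partial>\<rho>) = (\<integral>q. F q * W a t + v a t * (F q * snd q) \<partial>\<rho>) - (\<integral>q. (v a t * a) * F q \<partial>\<rho>)"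
      by (rule Bochner_Integration.integral_diff[OF Bochner_Integration.integrable_add[OF iA iB] iC])
    also have "\<dots> = (\<integral>q. F q * W a t \<partial>\<rho>) + (\<integral>q. v a t * (F q * snd q) \<partial>\<rho>) - (\<integral>q. (v a t * a) * F q \<partial>\<rho>)"
      by (subst Bochner_Integration.integral_add[OF iA iB]) simp
    also have "\<dots> = W a t * m + v a t * X"
      unfolding intFc integral_mult_right_zero intF Xeq by (simp add: algebra_simps)
    finally have eq: "(\<integral>q. F q * (W a t + v a t * (snd q - a)) \<partial>\<rho>) = W a t * m + v a t * X" using e0 by simp
    have "(\<integral>q. F q * (W a t + v a t * (snd q - a)) \<partial>\<rho>) \<le> (\<integral>q. F q * W (snd q) t \<partial>\<rho>)"
    proof (rule integral_mono)
      show "integrable \<rho> (\<lambda>q. F q * (W a t + v a t * (snd q - a)))"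
      proof (rule intgF[where C="\<bar>W a t\<bar> + M"])
        fix q assume "F q \<noteq> 0"
        from inE[OF this] a01 have "\<bar>snd q - a\<bar> \<le> 1" by auto
        then have "\<bar>v a t * (snd q - a)\<bar> \<le> M * 1"
          unfolding abs_mult by (rule mult_mono[OF vb]) (auto simp: Mnn)
        then show "\<bar>W a t + v a t * (snd q - a)\<bar> \<le> \<bar>W a t\<bar> + M" by linarith
      qed (use Mnn in auto)
      show "integrable \<rho> (\<lambda>q. F q * W (snd q) t)"
        by (rule intgF[where C=K]) (use Wb Knn in auto)
      fix q
      show "F q * (W a t + v a t * (snd q - a)) \<le> F q * W (snd q) t"
      proof (cases "F q = 0")
        case False
        then have "F q = 1" using F01[of q] by auto
        then show ?thesis using tang[OF a01 _ t01, of "snd q"] inE[OF False] by simp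
      qed simp
    qed
    then show ?thesis using eq vX unfolding a_def t_def by (simp add: algebra_simps)
  qed
  define A where "A = (\<integral>p. F p * W (fst p) (snd p) \<partial>\<rho>)"
  define D where "D = (\<integral>p. F p * W (snd p) (snd p) \<partial>\<rho>)"
  interpret pp: pair_prob_space \<rho> \<rho>
    by (simp add: pair_prob_space_def pair_sigma_finite_def rp prob_space_imp_sigma_finite)
  define J where "J = (\<lambda>z::(real\<times>real)\<times>(real\<times>real). F (fst z) * (F (snd z) * W (snd (snd z)) (snd (fst z))))"
  define H where "H = (\<lambda>z::(real\<times>real)\<times>(real\<times>real). F (fst z) * (F (snd z) * (W (snd (fst z)) (snd (fst z)) + W (snd (snd z)) (snd (snd z)))))"
  have Jm: "J \<in> borel_measurable (\<rho> \<Otimes>\<^sub>M \<rho>)" unfolding J_def by (rule meas_pp) measurable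
  have Hm: "H \<in> borel_measurable (\<rho> \<Otimes>\<^sub>M \<rho>)" unfolding H_def by (rule meas_pp) measurable
  have Jb: "\<bar>J z\<bar> \<le> K" for z
    unfolding J_def using F01[of "fst z"] F01[of "snd z"] Wb Knn by (auto simp: abs_mult)
  have Hb: "\<bar>H z\<bar> \<le> 2*K" for z
  proof -
    have "\<bar>W (snd (fst z)) (snd (fst z)) + W (snd (snd z)) (snd (snd z))\<bar> \<le> 2*K"
      using Wb[of "snd (fst z)" "snd (fst z)"] Wb[of "snd (snd z)" "snd (snd z)"] by linarith
    then show ?thesis unfolding H_def using F01[of "fst z"] F01[of "snd z"] Knn by (auto simp: abs_mult)
  qed
  have Ji: "integrable (\<rho> \<Otimes>\<^sub>M \<rho>) J" by (rule pp.integrable_const_bound[where B=K]) (auto simp: Jb Jm)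
  have Hi: "integrable (\<rho> \<Otimes>\<^sub>M \<rho>) H" by (rule pp.integrable_const_bound[where B="2*K"]) (auto simp: Hb Hm)
  have Jsi: "integrable (\<rho> \<Otimes>\<^sub>M \<rho>) (\<lambda>(x,y). J (y,x))"
  proof (rule pp.integrable_const_bound[where B=K])
    have "(\<lambda>z. J ((\<lambda>(x,y). (y,x)) z)) \<in> borel_measurable (\<rho> \<Otimes>\<^sub>M \<rho>)"
      by (rule measurable_compose[OF measurable_pair_swap' Jm])
    then show "(\<lambda>(x,y). J (y,x)) \<in> borel_measurable (\<rho> \<Otimes>\<^sub>M \<rho>)"
      by (simp add: case_prod_beta')
  qed (auto simp: Jb)
  have I_eq: "(\<integral>p. F p * (\<integral>q. F q * W (snd q) (snd p) \<partial>\<rho>) \<partial>\<rho>) = integral\<^sup>L (\<rho> \<Otimes>\<^sub>M \<rho>) J"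
    using pp.integral_fst'[OF Ji] unfolding J_def by simp
  have iF: "integrable \<rho> F" by (rule intg[where C=1]) (auto simp: Fb)
  have iA: "integrable \<rho> (\<lambda>p. F p * W (fst p) (snd p))" by (rule intgF[where C=K]) (auto simp: Wb Knn)
  have iD: "integrable \<rho> (\<lambda>p. F p * W (snd p) (snd p))" by (rule intgF[where C=K]) (auto simp: Wb Knn)
  have iI: "integrable \<rho> (\<lambda>p. F p * (\<integral>q. F q * W (snd q) (snd p) \<partial>\<rho>))"
    using pp.integrable_fst'[OF Ji] unfolding J_def by simp
  have step4: "m * A - M * \<delta> * m * m \<le> integral\<^sup>L (\<rho> \<Otimes>\<^sub>M \<rho>) J"
  proof -
    have "(\<integral>p. F p * (m * W (fst p) (snd p) - M * \<delta> * m) \<partial>\<rho>) = (\<integral>p. m * (F p * W (fst p) (snd p)) - (M * \<delta> * m) * F p \<partial>\<rho>)"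
      by (simp add: algebra_simps)
    also have "\<dots> = m * A - M * \<delta> * m * m"
      by (subst Bochner_Integration.integral_diff) (use iA iF intF in \<open>auto simp: A_def\<close>)
    finally have e: "(\<integral>p. F p * (m * W (fst p) (snd p) - M * \<delta> * m) \<partial>\<rho>) = m * A - M * \<delta> * m * m" .
    have "(\<integral>p. F p * (m * W (fst p) (snd p) - M * \<delta> * m) \<partial>\<rho>) \<le> (\<integral>p. F p * (\<integral>q. F q * W (snd q) (snd p) \<partial>\<rho>) \<partial>\<rho>)"
    proof (rule integral_mono[OF _ iI])
      show "integrable \<rho> (\<lambda>p. F p * (m * W (fst p) (snd p) - M * \<delta> * m))"
        using Bochner_Integration.integrable_diff[OF Bochner_Integration.integrable_mult_right[OF iA, of m] Bochner_Integration.integrable_mult_right[OF iF, of "M * \<delta> * m"]]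
        by (simp add: algebra_simps)
      fix p
      show "F p * (m * W (fst p) (snd p) - M * \<delta> * m) \<le> F p * (\<integral>q. F q * W (snd q) (snd p) \<partial>\<rho>)"
      proof (cases "F p = 0")
        case False
        then have "F p = 1" using F01[of p] by auto
        then show ?thesis using inner[OF False] by simp
      qed simp
    qed
    then show ?thesis using e I_eq by simp
  qed
  have step5: "2 * integral\<^sup>L (\<rho> \<Otimes>\<^sub>M \<rho>) J \<le> 2 * m * D"
  proof -
    have sw: "(\<integral>z. (\<lambda>(x,y). J (y,x)) z \<partial>(\<rho> \<Otimes>\<^sub>M \<rho>)) = integral\<^sup>L (\<rho> \<Otimes>\<^sub>M \<rho>) J"
      using pp.integral_product_swap[OF Jm] by simp
    have "2 * integral\<^sup>L (\<rho> \<Otimes>\<^sub>M \<rho>) J = (\<integral>z. J z + (\<lambda>(x,y). J (y,x)) z \<partial>(\<rho> \<Otimes>\<^sub>M \<rho>))"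
      using sw Bochner_Integration.integral_add[OF Ji Jsi] by simp
    also have "\<dots> \<le> integral\<^sup>L (\<rho> \<Otimes>\<^sub>M \<rho>) H"
    proof (rule integral_mono[OF Bochner_Integration.integrable_add[OF Ji Jsi] Hi])
      fix z :: "(real\<times>real)\<times>(real\<times>real)"
      obtain p q where z: "z = (p,q)" by (cases z)
      show "J z + (\<lambda>(x,y). J (y,x)) z \<le> H z"
      proof (cases "F p = 0 \<or> F q = 0")
        case True then show ?thesis unfolding z J_def H_def by auto
      next
        case False
        then have "F p = 1" "F q = 1" using F01[of p] F01[of q] by auto
        moreover have "snd p \<in> \<Theta>" "snd q \<in> \<Theta>" using inE False by auto
        ultimately show ?thesis unfolding z J_def H_def using cross[of "snd q" "snd p"] by simp
      qed
    qed
    also have "\<dots> = (\<integral>p. (\<integral>q. H (p,q) \<partial>\<rho>) \<partial>\<rho>)" using pp.integral_fst'[OF Hi] by simp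
    also have "\<dots> = (\<integral>p. m * (F p * W (snd p) (snd p)) + D * F p \<partial>\<rho>)"
    proof (rule Bochner_Integration.integral_cong[OF refl])
      fix p
      have "(\<integral>q. H (p,q) \<partial>\<rho>) = F p * (\<integral>q. F q * W (snd p) (snd p) + F q * W (snd q) (snd q) \<partial>\<rho>)"
        unfolding H_def integral_mult_right_zero[symmetric] by (simp add: algebra_simps)
      also have "\<dots> = F p * (W (snd p) (snd p) * m + D)"
        by (subst Bochner_Integration.integral_add) (use iF iD intFc in \<open>auto simp: D_def\<close>)
      finally show "(\<integral>q. H (p,q) \<partial>\<rho>) = m * (F p * W (snd p) (snd p)) + D * F p" by (simp add: algebra_simps)
    qed
    also have "\<dots> = m * D + D * m"
      by (subst Bochner_Integration.integral_add) (use iD iF intF in \<open>auto simp: D_def\<close>)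
    finally show ?thesis by (simp add: algebra_simps)
  qed
  have key: "A \<le> D + M * \<delta> * m"
  proof (cases "m = 0")
    case True
    have "E \<in> null_sets \<rho>"
      using True rp E unfolding m_def
      by (simp add: pp.M1.emeasure_eq_measure null_sets_def rs2)
    then have ae: "AE p in \<rho>. F p = 0" unfolding F_def
      by (rule AE_mp[OF AE_not_in]) auto
    have "A = 0" unfolding A_def
      by (subst integral_cong_AE[where g="\<lambda>_. 0"]) (use ae iA in \<open>auto\<close>)
    moreover have "D = 0" unfolding D_def
      by (subst integral_cong_AE[where g="\<lambda>_. 0"]) (use ae iD in \<open>auto\<close>)
    ultimately show ?thesis using True by simp
  next
    case False
    then have mp: "m > 0" using m0 by simp
    have "m * A - M * \<delta> * m * m \<le> m * D" using step4 step5 by linarith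
    then have "m * A \<le> m * (D + M * \<delta> * m)" by (simp add: algebra_simps)
    then show ?thesis using mp by simp
  qed
  then show ?thesis unfolding A_def D_def F_def E_def m_def .
qed


lemma binsum:
  fixes n :: nat assumes n: "n > 0"
  shows "(\<Sum>k\<le>n. indicator ({a\<in>{0..1}. \<lfloor>a * real n\<rfloor> = int k} \<times> \<Theta>) p) = (indicator ({0..1} \<times> \<Theta>) p :: real)"
proof (cases "p \<in> {0..1} \<times> \<Theta>")
  case True
  obtain a t where p: "p = (a,t)" by (cases p)
  have a: "0 \<le> a" "a \<le> 1" and t: "t \<in> \<Theta>" using True p by auto
  define k where "k = nat \<lfloor>a * real n\<rfloor>"
  have fl0: "0 \<le> \<lfloor>a * real n\<rfloor>" using a by simp
  have fln: "\<lfloor>a * real n\<rfloor> \<le> int n"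
  proof -
    have "a * real n \<le> real n" using a by (simp add: mult_left_le_one_le)
    then show ?thesis by (metis floor_mono floor_of_nat)
  qed
  have kn: "k \<le> n" using fln fl0 unfolding k_def by linarith
  have "(\<Sum>k'\<le>n. indicator ({a\<in>{0..1}. \<lfloor>a * real n\<rfloor> = int k'} \<times> \<Theta>) p :: real) = (\<Sum>k'\<le>n. if k' = k then 1 else 0)"
    apply (rule sum.cong[OF refl])
    using a t fl0 unfolding p k_def by (auto simp: indicator_def)
  also have "\<dots> = 1" using kn by simp
  finally show ?thesis using True by simp
qed (auto simp: indicator_def)

lemma binmeas: "{a\<in>{0..1::real}. \<lfloor>a * real n\<rfloor> = int k} \<in> sets borel"
  by measurable

lemma bindiam:
  fixes n :: nat assumes n: "n > 0"
  assumes "x \<in> {a\<in>{0..1}. \<lfloor>a * real n\<rfloor> = int k}" "y \<in> {a\<in>{0..1}. \<lfloor>a * real n\<rfloor> = int k}"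
  shows "\<bar>x - y\<bar> \<le> 1 / real n"
proof -
  have fx: "\<lfloor>x * real n\<rfloor> = int k" and fy: "\<lfloor>y * real n\<rfloor> = int k" using assms by auto
  have "real_of_int (int k) \<le> x * real n" "x * real n < real_of_int (int k) + 1"
    using fx floor_correct[of "x * real n"] by auto
  moreover have "real_of_int (int k) \<le> y * real n" "y * real n < real_of_int (int k) + 1"
    using fy floor_correct[of "y * real n"] by auto
  ultimately have "\<bar>x * real n - y * real n\<bar> \<le> 1" by linarith
  then have "\<bar>x - y\<bar> * real n \<le> 1" by (simp add: left_diff_distrib[symmetric] abs_mult)
  then show ?thesis using n by (simp add: field_simps)
qed


lemma approx:
  fixes n :: nat assumes n: "n > 0" and ae: "AE p in \<rho>. p \<in> {0..1} \<times> \<Theta>"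
  shows "(\<integral>p. W (fst p) (snd p) \<partial>\<rho>) \<le> (\<integral>p. W (snd p) (snd p) \<partial>\<rho>) + M / real n"
proof -
  define Bk where "Bk k = {a\<in>{0..1::real}. \<lfloor>a * real n\<rfloor> = int k}" for k :: nat
  define S where "S = {0..1::real} \<times> \<Theta>"
  have Sm[measurable]: "S \<in> sets (borel \<Otimes>\<^sub>M borel)" unfolding S_def by (rule prodborel) simp
  have Bkm[measurable]: "Bk k \<in> sets borel" for k unfolding Bk_def by (rule binmeas)
  have Ekm[measurable]: "Bk k \<times> \<Theta> \<in> sets (borel \<Otimes>\<^sub>M borel)" for k by (rule prodborel) simp
  have sumI: "(\<Sum>k\<le>n. indicator (Bk k \<times> \<Theta>) p) = (indicator S p :: real)" for p
    unfolding Bk_def S_def by (rule binsum[OF n])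
  have intgI: "integrable \<rho> (\<lambda>p. indicator E p * g p)" if "E \<in> sets (borel \<Otimes>\<^sub>M borel)"
    "g \<in> borel_measurable (borel \<Otimes>\<^sub>M borel)" "\<And>p. \<bar>g p\<bar> \<le> K" for E g
    by (rule intg[where C=K]) (use that Knn in \<open>auto simp: indicator_def\<close>)
  have iWf: "\<And>E. E \<in> sets (borel \<Otimes>\<^sub>M borel) \<Longrightarrow> integrable \<rho> (\<lambda>p. indicator E p * W (fst p) (snd p))"
    by (rule intgI) (auto simp: Wb)
  have iWd: "\<And>E. E \<in> sets (borel \<Otimes>\<^sub>M borel) \<Longrightarrow> integrable \<rho> (\<lambda>p. indicator E p * W (snd p) (snd p))"
    by (rule intgI) (auto simp: Wb)
  have aeS: "AE p in \<rho>. indicator S p = (1::real)" using ae unfolding S_def by eventually_elim auto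
  have split: "(\<integral>p. g p \<partial>\<rho>) = (\<Sum>k\<le>n. (\<integral>p. indicator (Bk k \<times> \<Theta>) p * g p \<partial>\<rho>))"
    if gi: "\<And>k. integrable \<rho> (\<lambda>p. indicator (Bk k \<times> \<Theta>) p * g p)" and gm: "g \<in> borel_measurable \<rho>" for g :: "real \<times> real \<Rightarrow> real"
  proof -
    have "(\<integral>p. g p \<partial>\<rho>) = (\<integral>p. (\<Sum>k\<le>n. indicator (Bk k \<times> \<Theta>) p * g p) \<partial>\<rho>)"
    proof (rule integral_cong_AE[OF gm])
      show "(\<lambda>p. \<Sum>k\<le>n. indicator (Bk k \<times> \<Theta>) p * g p) \<in> borel_measurable \<rho>"
        by (rule borel_measurable_sum) (rule borel_measurable_integrable[OF gi])
      show "AE p in \<rho>. g p = (\<Sum>k\<le>n. indicator (Bk k \<times> \<Theta>) p * g p)"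
        using aeS
      proof eventually_elim
        case (elim p)
        have "(\<Sum>k\<le>n. indicator (Bk k \<times> \<Theta>) p * g p) = (\<Sum>k\<le>n. indicator (Bk k \<times> \<Theta>) p) * g p"
          by (rule sum_distrib_right[symmetric])
        also have "\<dots> = g p" using sumI[of p] elim by simp
        finally show ?case by simp
      qed
    qed
    also have "\<dots> = (\<Sum>k\<le>n. (\<integral>p. indicator (Bk k \<times> \<Theta>) p * g p \<partial>\<rho>))"
      by (rule Bochner_Integration.integral_sum) (rule gi)
    finally show ?thesis .
  qed
  have e1: "(\<integral>p. W (fst p) (snd p) \<partial>\<rho>) = (\<Sum>k\<le>n. (\<integral>p. indicator (Bk k \<times> \<Theta>) p * W (fst p) (snd p) \<partial>\<rho>))"
    by (rule split) (auto intro!: iWf meas_r)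
  have e2: "(\<integral>p. W (snd p) (snd p) \<partial>\<rho>) = (\<Sum>k\<le>n. (\<integral>p. indicator (Bk k \<times> \<Theta>) p * W (snd p) (snd p) \<partial>\<rho>))"
    by (rule split) (auto intro!: iWd meas_r)
  have "(\<integral>p. (1::real) \<partial>\<rho>) = (\<Sum>k\<le>n. (\<integral>p. indicator (Bk k \<times> \<Theta>) p * (1::real) \<partial>\<rho>))"
    by (rule split[where g="\<lambda>_. 1"]) (auto intro!: intg[where C=1] simp: indicator_def)
  then have e3: "(\<Sum>k\<le>n. measure \<rho> (Bk k \<times> \<Theta>)) = 1"
    using prob_space.prob_space[OF rp] by (simp add: sp)
  have "(\<Sum>k\<le>n. (\<integral>p. indicator (Bk k \<times> \<Theta>) p * W (fst p) (snd p) \<partial>\<rho>))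
      \<le> (\<Sum>k\<le>n. (\<integral>p. indicator (Bk k \<times> \<Theta>) p * W (snd p) (snd p) \<partial>\<rho>) + M * (1 / real n) * measure \<rho> (Bk k \<times> \<Theta>))"
  proof (rule sum_mono)
    fix k
    show "(\<integral>p. indicator (Bk k \<times> \<Theta>) p * W (fst p) (snd p) \<partial>\<rho>)
      \<le> (\<integral>p. indicator (Bk k \<times> \<Theta>) p * W (snd p) (snd p) \<partial>\<rho>) + M * (1 / real n) * measure \<rho> (Bk k \<times> \<Theta>)"
      by (rule bin) (auto simp: Bk_def intro: bindiam[OF n])
  qed
  also have "\<dots> = (\<integral>p. W (snd p) (snd p) \<partial>\<rho>) + M / real n * (\<Sum>k\<le>n. measure \<rho> (Bk k \<times> \<Theta>))"
    by (simp add: e2 sum.distrib sum_distrib_left)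
  finally show ?thesis using e1 e3 by simp
qed


lemma main_ineq:
  assumes ae: "AE p in \<rho>. p \<in> {0..1} \<times> \<Theta>"
  shows "(\<integral>p. W (fst p) (snd p) \<partial>\<rho>) \<le> (\<integral>p. W (snd p) (snd p) \<partial>\<rho>)"
proof (rule ccontr)
  define X where "X = (\<integral>p. W (fst p) (snd p) \<partial>\<rho>)"
  define Y where "Y = (\<integral>p. W (snd p) (snd p) \<partial>\<rho>)"
  assume "\<not> ?thesis"
  then have d: "0 < (X - Y) / (M + 1)" using Mnn unfolding X_def Y_def by simp
  obtain n :: nat where n: "n > 0" "inverse (real n) < (X - Y) / (M + 1)"
    using ex_inverse_of_nat_less[OF d] by auto
  have "M / real n \<le> (M + 1) * inverse (real n)" using n by (simp add: divide_simps)
  also have "\<dots> < (M + 1) * ((X - Y) / (M + 1))" using n Mnn by (intro mult_strict_left_mono) auto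
  also have "\<dots> = X - Y" using Mnn by simp
  finally have "M / real n < X - Y" .
  moreover have "X \<le> Y + M / real n" unfolding X_def Y_def by (rule approx[OF n(1) ae])
  ultimately show False by simp
qed

end

lemma prior_basic:
  assumes "is_prior \<phi>"
  shows "sets \<phi> = sets borel" "prob_space \<phi>" "space \<phi> = UNIV" "emeasure \<phi> {0..1} = 1"
  using assms sets_eq_imp_space_eq[of \<phi> borel] unfolding is_prior_def by auto

lemma supp_closed: "closed (supp \<phi>)"
  unfolding supp_def by (rule closed_Inter) auto

lemma supp_sub:
  assumes "is_prior \<phi>" shows "supp \<phi> \<subseteq> {0..1}"
proof -
  note pb = prior_basic[OF assms]
  interpret prob_space \<phi> by (rule pb(2))
  have "emeasure \<phi> (space \<phi> - {0..1}) = 0"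
    using emeasure_compl[of "{0..1}" \<phi>] pb emeasure_space_1 by simp
  then have "{0..1} \<in> {C. closed C \<and> emeasure \<phi> (space \<phi> - C) = 0}" by simp
  then show ?thesis unfolding supp_def by blast
qed

lemma supp_full:
  assumes "is_prior \<phi>" shows "emeasure \<phi> (supp \<phi>) = 1"
proof -
  note pb = prior_basic[OF assms]
  interpret prob_space \<phi> by (rule pb(2))
  define \<F> where "\<F> = (\<lambda>C. UNIV - C) ` {C. closed C \<and> emeasure \<phi> (space \<phi> - C) = 0}"
  have "\<And>S. S \<in> \<F> \<Longrightarrow> open S" unfolding \<F>_def by auto
  then obtain \<F>' where F': "\<F>' \<subseteq> \<F>" "countable \<F>'" "\<Union>\<F>' = \<Union>\<F>" by (rule Lindelof)
  have compl: "UNIV - supp \<phi> = \<Union>\<F>" unfolding supp_def \<F>_def by auto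
  have "(\<Union>S\<in>\<F>'. S) \<in> null_sets \<phi>"
  proof (rule null_sets_UN'[OF F'(2)])
    fix S assume "S \<in> \<F>'"
    then have "S \<in> \<F>" using F' by auto
    then obtain C where "closed C" "emeasure \<phi> (space \<phi> - C) = 0" "S = UNIV - C" unfolding \<F>_def by auto
    then show "S \<in> null_sets \<phi>" using pb by (auto simp: null_sets_def)
  qed
  then have "space \<phi> - supp \<phi> \<in> null_sets \<phi>" using compl F'(3) pb by simp
  moreover have "supp \<phi> \<in> sets \<phi>" using pb supp_closed by simp
  ultimately show ?thesis
  proof -
    assume n: "space \<phi> - supp \<phi> \<in> null_sets \<phi>" and s: "supp \<phi> \<in> sets \<phi>"
    have "prob (space \<phi> - supp \<phi>) = 0" using n by (rule measure_eq_0_null_sets)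
    then have "prob (supp \<phi>) = 1" using prob_compl[OF s] by simp
    then show ?thesis by (simp add: emeasure_eq_measure)
  qed
qed


lemma cont_slice1:
  assumes "continuous_on ({0..1} \<times> {0..1}) (\<lambda>(a, \<theta>). f a \<theta>)" "\<theta> \<in> {0..1}"
  shows "continuous_on {0..1} (\<lambda>a. f a \<theta>)"
proof -
  have "continuous_on {0..1} (\<lambda>a. (\<lambda>(a, \<theta>). f a \<theta>) (a, \<theta>))"
    by (rule continuous_on_compose2[OF assms(1)]) (use assms(2) in \<open>auto intro!: continuous_intros\<close>)
  then show ?thesis by simp
qed

lemma tangent_V:
  fixes V v :: "real \<Rightarrow> real \<Rightarrow> real"
  assumes cV: "continuous_on ({0..1} \<times> {0..1}) (\<lambda>(a, \<theta>). V a \<theta>)"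
    and cv: "continuous_on ({0..1} \<times> {0..1}) (\<lambda>(a, \<theta>). v a \<theta>)"
    and der: "\<forall>a\<in>{0..1}. \<forall>\<theta>\<in>{0..1}. ((\<lambda>b. V b \<theta>) has_real_derivative v a \<theta>) (at a within {0..1})"
    and conv: "convex_on {0..1} (\<lambda>a. V a \<theta>)"
    and a: "a \<in> {0..1}" and x: "x \<in> {0..1}" and t: "\<theta> \<in> {0..1}"
  shows "V a \<theta> + v a \<theta> * (x - a) \<le> V x \<theta>"
proof -
  define g where "g c = V x \<theta> - V c \<theta> - v c \<theta> * (x - c)" for c
  have gc: "continuous_on {0..1} g" unfolding g_def
    by (intro continuous_on_diff continuous_on_mult continuous_on_const continuous_on_id cont_slice1[OF cV t] cont_slice1[OF cv t])
  have "g c \<ge> 0" if c: "c \<in> {0<..<1}" for c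
  proof -
    have "v c \<theta> * (x - c) \<le> V x \<theta> - V c \<theta>"
      by (rule convex_on_imp_above_tangent[OF conv connected_Icc _ x]) (use c der t in auto)
    then show ?thesis unfolding g_def by simp
  qed
  moreover have cl: "closure {0<..<1::real} = {0..1}" by simp
  ultimately have "g a \<ge> 0"
    using continuous_ge_on_closure[where S="{0<..<1}" and f=g and x=a and a=0] gc a by simp
  then show ?thesis unfolding g_def by simp
qed


lemma clamp_cont: "continuous_on UNIV (\<lambda>x::real. max 0 (min 1 x))"
  by (intro continuous_intros)

lemma clamp_id: "x \<in> {0..1} \<Longrightarrow> max 0 (min 1 x) = (x::real)" by auto

lemma clamp_in: "max 0 (min 1 x) \<in> {0..1::real}" by auto

lemma clamp_comp:
  fixes f :: "real \<Rightarrow> real \<Rightarrow> real"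
  assumes "continuous_on ({0..1} \<times> {0..1}) (\<lambda>(a, \<theta>). f a \<theta>)"
  shows "continuous_on UNIV (\<lambda>p. f (max 0 (min 1 (fst p))) (max 0 (min 1 (snd p))))"
proof -
  have "continuous_on UNIV (\<lambda>p. (\<lambda>(a, \<theta>). f a \<theta>) (max 0 (min 1 (fst p)), max 0 (min 1 (snd p :: real))))"
    by (rule continuous_on_compose2[OF assms]) (auto intro!: continuous_intros)
  then show ?thesis by simp
qed

lemma clamp_bound:
  fixes f :: "real \<Rightarrow> real \<Rightarrow> real"
  assumes "continuous_on ({0..1} \<times> {0..1}) (\<lambda>(a, \<theta>). f a \<theta>)"
  obtains K where "\<And>a t. \<bar>f (max 0 (min 1 a)) (max 0 (min 1 t))\<bar> \<le> K"
proof -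
  have "compact ((\<lambda>(a, \<theta>). f a \<theta>) ` ({0..1::real} \<times> {0..1::real}))"
    by (rule compact_continuous_image[OF assms]) (simp add: compact_Times)
  then have "bounded ((\<lambda>(a, \<theta>). f a \<theta>) ` ({0..1::real} \<times> {0..1::real}))" by (rule compact_imp_bounded)
  then obtain K where K: "\<forall>y \<in> (\<lambda>(a, \<theta>). f a \<theta>) ` ({0..1::real} \<times> {0..1::real}). \<bar>y\<bar> \<le> K"
    unfolding bounded_real by blast
  show ?thesis
  proof (rule that)
    fix a t :: real
    have "f (max 0 (min 1 a)) (max 0 (min 1 t)) \<in> (\<lambda>(a, \<theta>). f a \<theta>) ` ({0..1::real} \<times> {0..1::real})"
      using clamp_in by (auto intro!: image_eqI[where x="(max 0 (min 1 a), max 0 (min 1 t))"])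
    then show "\<bar>f (max 0 (min 1 a)) (max 0 (min 1 t))\<bar> \<le> K" using K by blast
  qed
qed


theorem corollary2:
  fixes V :: "real \<Rightarrow> real \<Rightarrow> real" and \<phi> :: "real measure"
  assumes "is_prior \<phi>"
    and "assumption1 V"
    and "\<And>\<theta>. \<theta> \<in> {0..1} \<Longrightarrow> convex_on {0..1} (\<lambda>a. V a \<theta>)"
    and "\<And>\<theta>1 \<theta>2. \<theta>1 \<in> supp \<phi> \<Longrightarrow> \<theta>2 \<in> supp \<phi> \<Longrightarrow>
           V \<theta>1 \<theta>2 + V \<theta>2 \<theta>1 \<le> V \<theta>1 \<theta>1 + V \<theta>2 \<theta>2"
  shows "optimal (\<lambda>a \<theta>. \<theta> - a) V \<phi> (full_disclosure (\<lambda>\<theta>. \<theta>) \<phi>)"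
proof -
  note pb = prior_basic[OF assms(1)]
  interpret phi: prob_space \<phi> by (rule pb(2))
  have cV: "continuous_on ({0..1} \<times> {0..1}) (\<lambda>(a, \<theta>). V a \<theta>)" using assms(2) unfolding assumption1_def by blast
  obtain v where cv: "continuous_on ({0..1} \<times> {0..1}) (\<lambda>(a, \<theta>). v a \<theta>)"
    and der: "\<forall>a\<in>{0..1}. \<forall>\<theta>\<in>{0..1}. ((\<lambda>b. V b \<theta>) has_real_derivative v a \<theta>) (at a within {0..1})"
    using assms(2) unfolding assumption1_def by blast
  define c where "c x = max 0 (min 1 x)" for x :: real
  define W where "W a t = V (c a) (c t)" for a t
  define v' where "v' a t = v (c a) (c t)" for a t
  define \<Theta> where "\<Theta> = supp \<phi>"
  have Tsub: "\<Theta> \<subseteq> {0..1}" unfolding \<Theta>_def by (rule supp_sub[OF assms(1)])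
  have Tcl: "closed \<Theta>" unfolding \<Theta>_def by (rule supp_closed)
  have Tfull: "emeasure \<phi> \<Theta> = 1" unfolding \<Theta>_def by (rule supp_full[OF assms(1)])
  have cid: "x \<in> {0..1} \<Longrightarrow> c x = x" for x unfolding c_def by (rule clamp_id)
  have Wc: "continuous_on UNIV (\<lambda>p. W (fst p) (snd p))" unfolding W_def c_def by (rule clamp_comp[OF cV])
  obtain K where Wb: "\<And>a t. \<bar>W a t\<bar> \<le> K" using clamp_bound[OF cV] unfolding W_def c_def by blast
  obtain M where vb: "\<And>a t. \<bar>v' a t\<bar> \<le> M" using clamp_bound[OF cv] unfolding v'_def c_def by blast
  have tang: "W a t + v' a t * (x - a) \<le> W x t" if "a \<in> {0..1}" "x \<in> {0..1}" "t \<in> {0..1}" for a x t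
    using tangent_V[OF cV cv der assms(3)[OF that(3)] that] that unfolding W_def v'_def by (simp add: cid)
  have cross: "W t1 t2 + W t2 t1 \<le> W t1 t1 + W t2 t2" if "t1 \<in> \<Theta>" "t2 \<in> \<Theta>" for t1 t2
    using assms(4)[of t1 t2] that Tsub unfolding W_def \<Theta>_def by (auto simp: cid subset_iff)
  define \<pi> where "\<pi> = full_disclosure (\<lambda>\<theta>. \<theta>) \<phi>"
  have dmeas: "(\<lambda>\<theta>::real. (\<theta>, \<theta>)) \<in> measurable \<phi> borel"
  proof -
    have "(\<lambda>\<theta>::real. (\<theta>, \<theta>)) \<in> measurable borel (borel \<Otimes>\<^sub>M borel)" by measurable
    then show ?thesis by (simp add: borel_prod measurable_cong_sets[OF pb(1) refl])
  qed
  have \<pi>_def': "\<pi> = distr \<phi> borel (\<lambda>\<theta>. (\<theta>, \<theta>))" unfolding \<pi>_def full_disclosure_def ..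
  have Tm[measurable]: "\<Theta> \<in> sets borel" using Tcl by simp
  have bor: "measurable (borel :: (real\<times>real) measure) N = measurable (borel \<Otimes>\<^sub>M borel) N" for N :: "'z measure"
    by (simp add: borel_prod)
  have impl: "implementable (\<lambda>a \<theta>. \<theta> - a) \<phi> \<pi>"
    unfolding implementable_def
  proof (intro conjI allI impI)
    show "sets \<pi> = sets borel" unfolding \<pi>_def' by simp
    show "prob_space \<pi>" unfolding \<pi>_def' by (rule phi.prob_space_distr[OF dmeas])
    have S: "{0..1} \<times> supp \<phi> \<in> sets (borel :: (real\<times>real) measure)"
      using pair_measureI[of "{0..1::real}" borel \<Theta> borel] Tm unfolding \<Theta>_def borel_prod by simp
    have pre: "(\<lambda>\<theta>. (\<theta>, \<theta>)) -` ({0..1} \<times> supp \<phi>) \<inter> space \<phi> = \<Theta>"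
      using Tsub pb(3) unfolding \<Theta>_def by auto
    show "emeasure \<pi> ({0..1} \<times> supp \<phi>) = 1"
      unfolding \<pi>_def' emeasure_distr[OF dmeas S] pre by (rule Tfull)
    have sm: "snd \<in> measurable (borel :: (real\<times>real) measure) borel" unfolding bor by measurable
    show "distr \<pi> borel snd = \<phi>"
      unfolding \<pi>_def' distr_distr[OF sm dmeas] comp_def snd_conv
      by (rule distr_id2) (simp add: pb(1))
    fix At :: "real set" assume At: "At \<in> sets borel \<and> At \<subseteq> {0..1}"
    then have Atm[measurable]: "At \<in> sets borel" by simp
    have fm: "(\<lambda>x::real\<times>real. indicator (At \<times> supp \<phi>) x *\<^sub>R (case x of (a, \<theta>) \<Rightarrow> \<theta> - a)) \<in> borel_measurable borel"
      unfolding bor \<Theta>_def[symmetric] by measurable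
    show "set_lebesgue_integral \<pi> (At \<times> supp \<phi>) (\<lambda>(a, \<theta>). \<theta> - a) = 0"
      unfolding set_lebesgue_integral_def \<pi>_def' integral_distr[OF dmeas fm] by simp
  qed
  have opt: "(\<integral>x. (\<lambda>(a, \<theta>). V a \<theta>) x \<partial>\<rho>) \<le> (\<integral>x. (\<lambda>(a, \<theta>). V a \<theta>) x \<partial>\<pi>)"
    if imp: "implementable (\<lambda>a \<theta>. \<theta> - a) \<phi> \<rho>" for \<rho>
  proof -
    have rs: "sets \<rho> = sets borel" and rp: "prob_space \<rho>" and rS: "emeasure \<rho> ({0..1} \<times> \<Theta>) = 1"
      and rd: "distr \<rho> borel snd = \<phi>"
      and P2: "\<And>At. At \<in> sets borel \<Longrightarrow> At \<subseteq> {0..1} \<Longrightarrow>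
        set_lebesgue_integral \<rho> (At \<times> \<Theta>) (\<lambda>(a, \<theta>). \<theta> - a) = 0"
      using imp unfolding implementable_def \<Theta>_def by auto
    interpret rho: prob_space \<rho> by (rule rp)
    have P2': "(\<integral>p. indicator (B \<times> \<Theta>) p * (snd p - fst p) \<partial>\<rho>) = 0"
      if "B \<in> sets borel" "B \<subseteq> {0..1}" for B
      using P2[OF that] unfolding set_lebesgue_integral_def by (simp add: case_prod_beta)
    have Sm: "{0..1} \<times> \<Theta> \<in> rho.events"
      using pair_measureI[of "{0..1::real}" borel \<Theta> borel] Tm unfolding rs borel_prod by simp
    have ae: "AE p in \<rho>. p \<in> {0..1} \<times> \<Theta>"
      using rS by (simp add: rho.AE_in_set_eq_1[OF Sm] rho.emeasure_eq_measure)
    have ineq: "(\<integral>p. W (fst p) (snd p) \<partial>\<rho>) \<le> (\<integral>p. W (snd p) (snd p) \<partial>\<rho>)"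
      by (rule main_ineq[OF Wc Wb vb tang cross Tsub Tcl rp rs P2' ae])
    have sm: "snd \<in> measurable \<rho> borel" unfolding measurable_cong_sets[OF rs refl] bor by measurable
    have Wdm: "(\<lambda>\<theta>. W \<theta> \<theta>) \<in> borel_measurable borel"
    proof -
      have "(\<lambda>\<theta>. (\<lambda>p. W (fst p) (snd p)) (\<theta>, \<theta>)) \<in> borel_measurable borel"
        by (rule measurable_compose[OF _ borel_measurable_continuous_onI[OF Wc]])
           (use dmeas in \<open>simp add: measurable_cong_sets[OF pb(1) refl]\<close>)
      then show ?thesis by simp
    qed
    have e1: "(\<integral>p. W (snd p) (snd p) \<partial>\<rho>) = (\<integral>\<theta>. W \<theta> \<theta> \<partial>\<phi>)"
      using integral_distr[OF sm Wdm] rd by simp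
    have aephi: "AE \<theta> in \<phi>. \<theta> \<in> {0..1}"
    proof -
      have "{0..1::real} \<in> phi.events" using pb(1) by simp
      then have "(AE x in \<phi>. x \<in> {0..1::real}) = (phi.prob {0..1} = 1)" by (rule phi.AE_in_set_eq_1)
      moreover have "phi.prob {0..1} = 1" using pb(4) by (simp add: phi.emeasure_eq_measure)
      ultimately show ?thesis by blast
    qed
    show ?thesis
    proof (cases "(\<lambda>x. (\<lambda>(a, \<theta>). V a \<theta>) x) \<in> borel_measurable (borel :: (real\<times>real) measure)")
      case True
      have Wfm: "(\<lambda>p. W (fst p) (snd p)) \<in> borel_measurable \<rho>"
        unfolding measurable_cong_sets[OF rs refl] by (rule borel_measurable_continuous_onI[OF Wc])
      have a: "(\<integral>x. (\<lambda>(a, \<theta>). V a \<theta>) x \<partial>\<rho>) = (\<integral>p. W (fst p) (snd p) \<partial>\<rho>)"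
      proof (rule integral_cong_AE)
        show "(\<lambda>x. (\<lambda>(a, \<theta>). V a \<theta>) x) \<in> borel_measurable \<rho>" using True by (simp add: measurable_cong_sets[OF rs refl])
        show "(\<lambda>p. W (fst p) (snd p)) \<in> borel_measurable \<rho>" by (rule Wfm)
        show "AE x in \<rho>. (\<lambda>(a, \<theta>). V a \<theta>) x = W (fst x) (snd x)"
          using ae by eventually_elim (use Tsub in \<open>auto simp: W_def cid subset_iff\<close>)
      qed
      have dm: "(\<lambda>\<theta>::real. (\<theta>, \<theta>)) \<in> measurable \<phi> borel" by (rule dmeas)
      have b: "(\<integral>x. (\<lambda>(a, \<theta>). V a \<theta>) x \<partial>\<pi>) = (\<integral>\<theta>. V \<theta> \<theta> \<partial>\<phi>)"
        unfolding \<pi>_def' using integral_distr[OF dm True] by simp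
      have c: "(\<integral>\<theta>. V \<theta> \<theta> \<partial>\<phi>) = (\<integral>\<theta>. W \<theta> \<theta> \<partial>\<phi>)"
      proof (rule integral_cong_AE)
        have "(\<lambda>\<theta>. (\<lambda>x. (\<lambda>(a, \<theta>). V a \<theta>) x) (\<theta>, \<theta>)) \<in> borel_measurable \<phi>"
          by (rule measurable_compose[OF dm True])
        then show "(\<lambda>\<theta>. V \<theta> \<theta>) \<in> borel_measurable \<phi>" by simp
        show "(\<lambda>\<theta>. W \<theta> \<theta>) \<in> borel_measurable \<phi>" using Wdm by (simp add: measurable_cong_sets[OF pb(1) refl])
        show "AE \<theta> in \<phi>. V \<theta> \<theta> = W \<theta> \<theta>" using aephi by eventually_elim (auto simp: W_def cid)
      qed
      show ?thesis using a b c e1 ineq by simp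
    next
      case False
      have "\<not> integrable \<rho> (\<lambda>x. (\<lambda>(a, \<theta>). V a \<theta>) x)"
        using False borel_measurable_integrable by (auto simp: measurable_cong_sets[OF rs refl])
      moreover have "\<not> integrable \<pi> (\<lambda>x. (\<lambda>(a, \<theta>). V a \<theta>) x)"
        using False borel_measurable_integrable unfolding \<pi>_def' by (auto simp: measurable_cong_sets[OF sets_distr refl])
      ultimately show ?thesis by (simp add: not_integrable_integral_eq)
    qed
  qed
  show ?thesis unfolding optimal_def \<pi>_def[symmetric] using impl opt by blast
qed

end
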